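(* Let $0<\alpha<2$. There exists $\delta=\delta(\alpha)>0$ (one may take $\delta=\min\{1/4,(3C)^{-1/(1+\alpha)}\}$ with $C=2^{\alpha+1}(1+2\alpha)$) such that the following holds. Let $\rho:\mathbb{R}\to\mathbb{R}$ be a $C^1$, $1$-periodic, even function which is nondecreasing on $[0,1/2]$. For $x\in(0,1/2]$ define $$I(x)=\int_0^x(\rho(y)-\rho(x))\left(\frac{1}{(x+y)^\alpha}+\frac{1}{(x-y)^\alpha}\right)dy,\qquad II_2(x)=\sum_{l=1}^\infty\int_{l-x}^{l+x}(\rho(y)-\rho(x))\left(\frac{1}{(x+y)^\alpha}-\frac{1}{(y-x)^\alpha}\right)dy.$$ Then $I(x)+II_2(x)\le0$ for all $x\in(0,\delta]$. *)

theory Defs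
  imports "HOL-Analysis.Analysis"
begin

text \<open>The integral I(x) (Henstock-Kurzweil integral over [0,x]; the integrand is
absolutely integrable for 0 < alpha < 2 and rho C^1).\<close>
definition I_term :: "real \<Rightarrow> (real \<Rightarrow> real) \<Rightarrow> real \<Rightarrow> real" where
  "I_term \<alpha> \<rho> x =
     integral {0..x} (\<lambda>y. (\<rho> y - \<rho> x) * (1 / (x + y) powr \<alpha> + 1 / (x - y) powr \<alpha>))"

definition II2_term :: "real \<Rightarrow> (real \<Rightarrow> real) \<Rightarrow> real \<Rightarrow> real" where
  "II2_term \<alpha> \<rho> x =
     (\<Sum>l. integral {real (Suc l) - x .. real (Suc l) + x}
        (\<lambda>y. (\<rho> y - \<rho> x) * (1 / (x + y) powr \<alpha> - 1 / (y - x) powr \<alpha>)))"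

end

theory Submission
  imports Defs
begin


lemma lip_bound:
  fixes \<rho> D :: "real \<Rightarrow> real"
  assumes der: "\<And>t. (\<rho> has_real_derivative D t) (at t)"
    and bnd: "\<And>t. t \<in> {a..b} \<Longrightarrow> \<bar>D t\<bar> \<le> M"
    and y: "y \<in> {a..b}" and z: "z \<in> {a..b}"
  shows "\<bar>\<rho> y - \<rho> z\<bar> \<le> M * \<bar>y - z\<bar>"
proof -
  have key: "\<bar>\<rho> v - \<rho> u\<bar> \<le> M * \<bar>v - u\<bar>" if "u < v" "u \<in> {a..b}" "v \<in> {a..b}" for u v
  proof -
    obtain w where w: "u < w" "w < v" "\<rho> v - \<rho> u = (v - u) * D w"
      using MVT2[OF \<open>u < v\<close>, of \<rho> D] der by blast
    have "w \<in> {a..b}" using w that by auto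
    hence "\<bar>D w\<bar> \<le> M" by (rule bnd)
    have "\<bar>\<rho> v - \<rho> u\<bar> = \<bar>v - u\<bar> * \<bar>D w\<bar>" using w by (simp add: abs_mult)
    also have "\<dots> \<le> \<bar>v - u\<bar> * M" using \<open>\<bar>D w\<bar> \<le> M\<close> by (simp add: mult_left_mono)
    finally show ?thesis by (simp add: mult.commute)
  qed
  consider "y < z" | "y = z" | "z < y" by linarith
  then show ?thesis
  proof cases
    case 1 then show ?thesis using key[of y z] y z by (simp add: abs_minus_commute)
  next
    case 2 then show ?thesis by simp
  next
    case 3 then show ?thesis using key[of z y] y z by simp
  qed
qed

lemma periodic_nat:
  fixes \<rho> :: "real \<Rightarrow> real"
  assumes "\<forall>t. \<rho> (t + 1) = \<rho> t"
  shows "\<rho> (t + real n) = \<rho> t"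
proof (induction n)
  case 0 then show ?case by simp
next
  case (Suc n)
  have "\<rho> (t + real (Suc n)) = \<rho> ((t + real n) + 1)" by (simp add: algebra_simps)
  also have "\<dots> = \<rho> (t + real n)" using assms by blast
  finally show ?case using Suc by simp
qed

lemma even_mono_le:
  fixes \<rho> :: "real \<Rightarrow> real"
  assumes ev: "\<forall>t. \<rho> (- t) = \<rho> t" and mo: "mono_on {0..1/2} \<rho>"
    and "\<bar>z\<bar> \<le> x" "x \<le> 1/2"
  shows "\<rho> z \<le> \<rho> x"
proof -
  have "\<rho> z = \<rho> \<bar>z\<bar>" using ev by (cases "z \<ge> 0") auto
  also have "\<dots> \<le> \<rho> x" using mo assms(3,4) by (intro mono_onD[OF mo]) auto
  finally show ?thesis .
qed

lemma kernel_bound: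
  fixes \<alpha> x y k :: real
  assumes a: "0 < \<alpha>" and k: "1 \<le> k" and x: "0 < x" "x \<le> 1/4" and y: "y \<in> {k-x..k+x}"
  shows "0 \<le> 1 / (y - x) powr \<alpha> - 1 / (x + y) powr \<alpha>"
    and "1 / (y - x) powr \<alpha> - 1 / (x + y) powr \<alpha> \<le> 2 * x * \<alpha> * 2 powr (\<alpha> + 1) * k powr (- \<alpha> - 1)"
proof -
  have p: "y - x > 0" "y - x \<ge> k / 2" using y x k by auto
  have "(y - x) powr \<alpha> \<le> (x + y) powr \<alpha>" using p x a by (intro powr_mono2) auto
  moreover have "(y - x) powr \<alpha> > 0" using p by simp
  ultimately show "0 \<le> 1 / (y - x) powr \<alpha> - 1 / (x + y) powr \<alpha>"
    by (simp add: frac_le)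
  have der: "\<And>t. y - x \<le> t \<Longrightarrow> t \<le> y + x \<Longrightarrow> ((\<lambda>t. t powr (-\<alpha>)) has_real_derivative (- \<alpha> * t powr (- \<alpha> - 1))) (at t)"
  proof -
    fix t assume "y - x \<le> t" "t \<le> y + x"
    hence "t > 0" using p by linarith
    show "((\<lambda>t. t powr (-\<alpha>)) has_real_derivative (- \<alpha> * t powr (- \<alpha> - 1))) (at t)"
      using has_real_derivative_powr[OF \<open>t > 0\<close>, of "-\<alpha>"] by (simp add: algebra_simps)
  qed
  obtain z where z: "y - x < z" "z < y + x"
    "(y + x) powr (-\<alpha>) - (y - x) powr (-\<alpha>) = ((y + x) - (y - x)) * (- \<alpha> * z powr (- \<alpha> - 1))"
    using MVT2[of "y - x" "y + x" "\<lambda>t. t powr (-\<alpha>)" "\<lambda>t. - \<alpha> * t powr (- \<alpha> - 1)"] der x by force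
  have eq: "1 / (y - x) powr \<alpha> - 1 / (x + y) powr \<alpha> = 2 * x * \<alpha> * z powr (- \<alpha> - 1)"
    using z(3) p by (simp add: powr_minus_divide algebra_simps)
  have "z powr (- \<alpha> - 1) \<le> (k / 2) powr (- \<alpha> - 1)"
    using z p a k by (intro powr_mono2') auto
  also have "\<dots> = 2 powr (\<alpha> + 1) * k powr (- \<alpha> - 1)"
    using k by (simp add: powr_divide powr_minus_divide divide_simps flip: powr_add)
  finally have "z powr (- \<alpha> - 1) \<le> 2 powr (\<alpha> + 1) * k powr (- \<alpha> - 1)" .
  then show "1 / (y - x) powr \<alpha> - 1 / (x + y) powr \<alpha> \<le> 2 * x * \<alpha> * 2 powr (\<alpha> + 1) * k powr (- \<alpha> - 1)"
    unfolding eq using x a by (simp add: mult_left_mono)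
qed


lemma refl_aux:
  assumes h: "(\<lambda>t. t powr (1 - \<alpha>)) integrable_on {0..x::real}"
  shows "(\<lambda>t. (- t) powr (1 - \<alpha>)) integrable_on {-x..-0}"
  by (rule Henstock_Kurzweil_Integration.integrable_reflect_real[THEN iffD2, OF h])

lemma powr_refl_int:
  fixes \<alpha> x :: real
  assumes "0 < \<alpha>" "\<alpha> < 2" "0 \<le> x"
  shows "(\<lambda>t. (x - t) powr (1 - \<alpha>)) integrable_on {0..x}"
proof -
  have m: "-1 < 1 - \<alpha>" using assms(2) by simp
  have p: "(\<lambda>t. (- t) powr (1 - \<alpha>)) integrable_on {-x..-0}"
    by (rule refl_aux[OF integrable_on_powr_from_0[OF m assms(3)]])
  note a = integrable_shift_real_ivl[OF p, of "-x"]
  have e1: "{-x - -x..-0 - -x} = {0..x}" by simp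
  have e2: "(\<lambda>t. (- (t + - x)) powr (1 - \<alpha>)) = (\<lambda>t. (x - t) powr (1 - \<alpha>))" by simp
  show ?thesis using a unfolding e1 e2 .
qed

lemma small_lem:
  fixes \<alpha> C0 x :: real
  assumes a: "0 < \<alpha>" and C0: "0 \<le> C0" and x0: "0 < x"
    and xd: "x \<le> min (1/4) ((1 / (C0 + 1)) powr (1 / (1 + \<alpha>)))"
  shows "C0 * x \<le> 1 / x powr \<alpha>"
proof -
  have xd': "x \<le> (1 / (C0 + 1)) powr (1 / (1 + \<alpha>))" using xd by simp
  have "x powr (1 + \<alpha>) \<le> ((1 / (C0 + 1)) powr (1 / (1 + \<alpha>))) powr (1 + \<alpha>)"
    by (rule powr_mono2) (use xd' x0 a in auto)
  also have "\<dots> = (1 / (C0 + 1)) powr ((1 / (1 + \<alpha>)) * (1 + \<alpha>))" by (rule powr_powr)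
  also have "(1 / (1 + \<alpha>)) * (1 + \<alpha>) = 1" using a by simp
  also have "(1 / (C0 + 1)) powr 1 = 1 / (C0 + 1)" using C0 by simp
  finally have h1: "x powr (1 + \<alpha>) \<le> 1 / (C0 + 1)" .
  have h2: "x powr (1 + \<alpha>) = x * x powr \<alpha>" using x0 by (simp add: powr_add)
  have "C0 * x powr (1 + \<alpha>) \<le> C0 * (1 / (C0 + 1))" by (rule mult_left_mono[OF h1 C0])
  also have "\<dots> \<le> 1" using C0 by (simp add: field_simps)
  finally have h3: "(C0 * x) * x powr \<alpha> \<le> 1" unfolding h2 by (simp add: mult.assoc)
  have xp: "x powr \<alpha> > 0" using x0 by simp
  show ?thesis using h3 xp by (simp add: le_divide_eq)
qed
lemma comb:
  fixes I II J a C0x :: real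
  assumes "I \<le> - a * J" "II \<le> C0x * J" "0 \<le> J" "C0x \<le> a"
  shows "I + II \<le> 0"
proof -
  have "C0x * J \<le> a * J" by (rule mult_right_mono) (use assms in auto)
  moreover have "- a * J = - (a * J)" by simp
  ultimately show ?thesis using assms by linarith
qed

lemma fint_lem:
  fixes \<alpha> x M :: real and \<rho> D :: "real \<Rightarrow> real"
  assumes a: "0 < \<alpha>" "\<alpha> < 2" and der: "\<And>t. (\<rho> has_real_derivative D t) (at t)"
    and M: "\<And>t. t \<in> {0..1} \<Longrightarrow> \<bar>D t\<bar> \<le> M" and M0: "0 \<le> M"
    and rc: "\<And>T. continuous_on T \<rho>"
    and x0: "0 < x" and x14: "x \<le> 1/4"
  shows "(\<lambda>y. (\<rho> y - \<rho> x) * (1 / (x + y) powr \<alpha> + 1 / (x - y) powr \<alpha>)) integrable_on {0..x}"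
proof -
  define f where "f = (\<lambda>y. (\<rho> y - \<rho> x) * (1 / (x + y) powr \<alpha> + 1 / (x - y) powr \<alpha>))"
  define b where "b = (\<lambda>y. 2 * M * (x - y) powr (1 - \<alpha>))"
  have "(\<lambda>t. (x - t) powr (1 - \<alpha>)) integrable_on {0..x}"
    by (rule powr_refl_int[OF a]) (use x0 in simp)
  hence "b integrable_on {0..x}" unfolding b_def by (rule integrable_on_mult_right)
  hence bint: "b integrable_on {0<..<x}" by (simp only: integrable_on_Icc_iff_Ioo)
  have "continuous_on {0<..<x} f" unfolding f_def
    by (intro continuous_intros rc) auto
  hence fm: "f \<in> borel_measurable (lebesgue_on {0<..<x})"
    by (rule continuous_imp_measurable_on_sets_lebesgue) auto
  have fb: "norm (f y) \<le> b y" if y: "y \<in> {0<..<x}" for y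
  proof -
    have y1: "0 < x - y" "x - y \<le> x + y" using y by auto
    have pp: "(x - y) powr \<alpha> > 0" using y1 by simp
    have A: "1 / (x + y) powr \<alpha> \<le> 1 / (x - y) powr \<alpha>"
      using y1 a pp by (intro divide_left_mono powr_mono2) auto
    have L0: "\<bar>\<rho> x - \<rho> y\<bar> \<le> M * \<bar>x - y\<bar>"
      by (rule lip_bound[OF der M]) (use y x14 in auto)
    have L: "\<bar>\<rho> y - \<rho> x\<bar> \<le> M * (x - y)"
      using L0 y1 by (simp add: abs_minus_commute)
    have nn: "0 \<le> 1 / (x + y) powr \<alpha> + 1 / (x - y) powr \<alpha>" by simp
    have "norm (f y) = \<bar>\<rho> y - \<rho> x\<bar> * (1 / (x + y) powr \<alpha> + 1 / (x - y) powr \<alpha>)"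
      unfolding f_def real_norm_def abs_mult using nn by simp
    also have "\<dots> \<le> (M * (x - y)) * (2 * (1 / (x - y) powr \<alpha>))"
      using L A nn M0 y1 by (intro mult_mono) auto
    also have "\<dots> = 2 * M * ((x - y) powr 1 / (x - y) powr \<alpha>)" using y1 by simp
    also have "(x - y) powr 1 / (x - y) powr \<alpha> = (x - y) powr (1 - \<alpha>)"
      by (rule powr_diff[symmetric])
    also have "2 * M * (x - y) powr (1 - \<alpha>) = b y" unfolding b_def ..
    finally show ?thesis .
  qed
  have "f absolutely_integrable_on {0<..<x}"
    by (rule measurable_bounded_by_integrable_imp_absolutely_integrable[OF fm _ bint fb]) auto
  hence "f integrable_on {0<..<x}" by (rule set_lebesgue_integral_eq_integral(1))
  hence "f integrable_on {0..x}" by (simp only: integrable_on_Icc_iff_Ioo)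
  thus ?thesis unfolding f_def .
qed

lemma partA:
  fixes \<alpha> x M :: real and \<rho> D :: "real \<Rightarrow> real"
  assumes a: "0 < \<alpha>" "\<alpha> < 2" and der: "\<And>t. (\<rho> has_real_derivative D t) (at t)"
    and M: "\<And>t. t \<in> {0..1} \<Longrightarrow> \<bar>D t\<bar> \<le> M" and M0: "0 \<le> M"
    and rc: "\<And>T. continuous_on T \<rho>"
    and x0: "0 < x" and x14: "x \<le> 1/4"
    and gnn: "\<And>y. \<bar>y\<bar> \<le> x \<Longrightarrow> \<rho> y \<le> \<rho> x"
  shows "I_term \<alpha> \<rho> x \<le> - (1 / x powr \<alpha>) * integral {0..x} (\<lambda>y. \<rho> x - \<rho> y)"
proof -
  define f where "f = (\<lambda>y. (\<rho> y - \<rho> x) * (1 / (x + y) powr \<alpha> + 1 / (x - y) powr \<alpha>))"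
  define g where "g = (\<lambda>y. \<rho> x - \<rho> y)"
  have fint: "f integrable_on {0..x}"
    unfolding f_def by (rule fint_lem[OF a der M M0 rc x0 x14])
  have gc: "continuous_on T g" for T unfolding g_def by (intro continuous_intros rc)
  have gint: "g integrable_on {a..b}" for a b by (rule integrable_continuous_interval[OF gc])
  have "I_term \<alpha> \<rho> x = integral {0..x} f" unfolding I_term_def f_def ..
  also have "\<dots> \<le> integral {0..x} (\<lambda>y. - (1 / x powr \<alpha>) * g y)"
  proof (rule integral_le[OF fint])
    show "(\<lambda>y. - (1 / x powr \<alpha>) * g y) integrable_on {0..x}"
      by (rule integrable_on_mult_right[OF gint])
    fix y assume y: "y \<in> {0..x}"
    show "f y \<le> - (1 / x powr \<alpha>) * g y"
    proof (cases "y = x")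
      case True then show ?thesis unfolding f_def g_def by simp
    next
      case False
      hence y1: "0 < x - y" "x - y \<le> x" using y by auto
      have "(x - y) powr \<alpha> \<le> x powr \<alpha>" using y1 a by (intro powr_mono2) auto
      moreover have "0 < (x - y) powr \<alpha>" using y1 by simp
      ultimately have B: "1 / x powr \<alpha> \<le> 1 / (x - y) powr \<alpha>"
        by (intro frac_le) auto
      have "0 \<le> 1 / (x + y) powr \<alpha>" by simp
      hence B2: "1 / x powr \<alpha> \<le> 1 / (x + y) powr \<alpha> + 1 / (x - y) powr \<alpha>" using B by linarith
      have gy: "g y \<ge> 0" using gnn[of y] y unfolding g_def by auto
      have aux: "\<And>a b c::real. (a - b) * c = - ((b - a) * c)" by algebra
      have "f y = - (g y * (1 / (x + y) powr \<alpha> + 1 / (x - y) powr \<alpha>))"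
        unfolding f_def g_def by (rule aux)
      also have "\<dots> \<le> - (g y * (1 / x powr \<alpha>))"
        using mult_left_mono[OF B2 gy] by linarith
      finally show ?thesis by simp
    qed
  qed
  also have "\<dots> = - (1 / x powr \<alpha>) * integral {0..x} g" by simp
  finally show ?thesis unfolding g_def .
qed

lemma partB:
  fixes \<alpha> x S :: real and \<rho> :: "real \<Rightarrow> real"
  assumes a: "0 < \<alpha>" and rc: "\<And>T. continuous_on T \<rho>"
    and per: "\<forall>t. \<rho> (t + 1) = \<rho> t" and ev: "\<forall>t. \<rho> (- t) = \<rho> t"
    and x0: "0 < x" and x14: "x \<le> 1/4"
    and gnn0: "\<And>y. \<bar>y\<bar> \<le> x \<Longrightarrow> \<rho> y \<le> \<rho> x"
    and S: "(\<lambda>n. real (Suc n) powr (- \<alpha> - 1)) sums S"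
  shows "II2_term \<alpha> \<rho> x \<le> (4 * \<alpha> * 2 powr (\<alpha> + 1) * S * x) * integral {0..x} (\<lambda>y. \<rho> x - \<rho> y)"
proof -
  define g where "g = (\<lambda>y. \<rho> x - \<rho> y)"
  define J where "J = integral {0..x} g"
  have gc: "continuous_on T g" for T unfolding g_def by (intro continuous_intros rc)
  have gint: "g integrable_on {a..b}" for a b by (rule integrable_continuous_interval[OF gc])
  have gnn: "g z \<ge> 0" if "\<bar>z\<bar> \<le> x" for z using gnn0[OF that] unfolding g_def by simp
  define h where "h = (\<lambda>y. (\<rho> y - \<rho> x) * (1 / (x + y) powr \<alpha> - 1 / (y - x) powr \<alpha>))"
  define T where "T = (\<lambda>n. integral {real (Suc n) - x .. real (Suc n) + x} h)"
  define c where "c = 2 * x * \<alpha> * 2 powr (\<alpha> + 1)"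
  have Tb: "0 \<le> T n \<and> T n \<le> c * (2 * J) * real (Suc n) powr (- \<alpha> - 1)" for n
  proof -
    define k where "k = real (Suc n)"
    have k1: "1 \<le> k" unfolding k_def by simp
    have pk: "\<rho> (y + k) = \<rho> y" for y unfolding k_def by (rule periodic_nat[OF per])
    have hc: "continuous_on {k - x..k + x} h" unfolding h_def
      using k1 x14 x0 by (intro continuous_intros rc) auto
    have hint: "h integrable_on {k - x..k + x}" by (rule integrable_continuous_interval[OF hc])
    have hg: "h y = g y * (1 / (y - x) powr \<alpha> - 1 / (x + y) powr \<alpha>)" for y
    proof -
      have aux: "\<And>a b c d::real. (a - b) * (c - d) = (b - a) * (d - c)" by algebra
      show ?thesis unfolding h_def g_def by (rule aux)
    qed
    have gy: "g y \<ge> 0" if "y \<in> {k - x..k + x}" for y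
    proof -
      have "g y = g (y - k)" unfolding g_def using pk[of "y - k"] by simp
      also have "\<dots> \<ge> 0" using that by (intro gnn) auto
      finally show ?thesis .
    qed
    have T0: "0 \<le> T n" unfolding T_def k_def[symmetric]
    proof (rule integral_nonneg[OF hint])
      fix y assume y: "y \<in> {k - x..k + x}"
      show "0 \<le> h y" unfolding hg
        by (rule mult_nonneg_nonneg[OF gy[OF y] kernel_bound(1)[OF a k1 x0 x14 y]])
    qed
    have "T n \<le> integral {k - x..k + x} (\<lambda>y. (c * k powr (- \<alpha> - 1)) * g y)"
      unfolding T_def k_def[symmetric]
    proof (rule integral_le[OF hint])
      show "(\<lambda>y. (c * k powr (- \<alpha> - 1)) * g y) integrable_on {k - x..k + x}"
        by (rule integrable_on_mult_right[OF gint])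
      fix y assume y: "y \<in> {k - x..k + x}"
      have "h y \<le> g y * (2 * x * \<alpha> * 2 powr (\<alpha> + 1) * k powr (- \<alpha> - 1))"
        unfolding hg by (rule mult_left_mono[OF kernel_bound(2)[OF a k1 x0 x14 y] gy[OF y]])
      thus "h y \<le> (c * k powr (- \<alpha> - 1)) * g y" by (simp add: c_def mult_ac)
    qed
    also have "\<dots> = (c * k powr (- \<alpha> - 1)) * integral {k - x..k + x} g" by simp
    also have "integral {k - x..k + x} g = 2 * J"
    proof -
      have "integral {k - x..k + x} g = integral {k - x - k..k + x - k} (\<lambda>y. g (y + k))"
        by (rule integral_shift_real_ivl[symmetric])
      also have "(\<lambda>y. g (y + k)) = g" using pk by (simp add: g_def)
      also have "{k - x - k..k + x - k} = {-x..x}" by simp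
      also have "integral {-x..x} g = integral {-x..0} g + integral {0..x} g"
      proof -
        have "integral {-x..0} g + integral {0..x} g = integral {-x..x} g"
          by (rule Henstock_Kurzweil_Integration.integral_combine) (use x0 gint in auto)
        thus ?thesis by simp
      qed
      also have "integral {-x..0} g = integral {-x.. -0} (\<lambda>y. g (- y))"
      proof -
        have "(\<lambda>y. g (- y)) = g" using ev by (simp add: g_def)
        thus ?thesis by simp
      qed
      also have "\<dots> = J" unfolding J_def by (rule Henstock_Kurzweil_Integration.integral_reflect_real)
      finally show ?thesis unfolding J_def by simp
    qed
    finally show ?thesis using T0 unfolding k_def by (simp add: mult_ac)
  qed
  have le: "T n \<le> c * (2 * J) * real (Suc n) powr (- \<alpha> - 1)" for n using Tb[of n] by simp
  have bs: "(\<lambda>n. c * (2 * J) * real (Suc n) powr (- \<alpha> - 1)) sums (c * (2 * J) * S)"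
    by (rule sums_mult[OF S])
  have Tsum: "summable T"
  proof (rule summable_comparison_test'[OF sums_summable[OF bs], of 0])
    fix n :: nat
    show "norm (T n) \<le> c * (2 * J) * real (Suc n) powr (- \<alpha> - 1)" using Tb[of n] by simp
  qed
  have "II2_term \<alpha> \<rho> x = suminf T" unfolding II2_term_def T_def h_def ..
  also have "\<dots> \<le> (\<Sum>n. c * (2 * J) * real (Suc n) powr (- \<alpha> - 1))"
    by (rule suminf_le[OF le Tsum sums_summable[OF bs]])
  also have "\<dots> = c * (2 * J) * S" by (rule sums_unique[OF bs, symmetric])
  also have "\<dots> = (4 * \<alpha> * 2 powr (\<alpha> + 1) * S * x) * J" unfolding c_def by simp
  finally show ?thesis unfolding J_def g_def .
qed

theorem lemma2p5:
  fixes \<alpha> :: real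
  assumes "0 < \<alpha>" and "\<alpha> < 2"
  shows "\<exists>\<delta>>0. \<forall>\<rho> :: real \<Rightarrow> real.
           \<rho> C1_differentiable_on UNIV \<and>
           (\<forall>t. \<rho> (t + 1) = \<rho> t) \<and>
           (\<forall>t. \<rho> (- t) = \<rho> t) \<and>
           mono_on {0..1/2} \<rho>
           \<longrightarrow> (\<forall>x \<in> {0<..\<delta>}. I_term \<alpha> \<rho> x + II2_term \<alpha> \<rho> x \<le> 0)"
proof -
  have "summable (\<lambda>n. real n powr (- \<alpha> - 1))"
    using assms(1) by (subst summable_real_powr_iff) simp
  hence "summable (\<lambda>n. real (Suc n) powr (- \<alpha> - 1))"
    by (subst summable_Suc_iff)
  then obtain S where S: "(\<lambda>n. real (Suc n) powr (- \<alpha> - 1)) sums S"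
    by (auto simp: summable_def)
  have S0: "S \<ge> 0" by (rule sums_le[OF _ sums_zero S]) simp
  define C0 where "C0 = 4 * \<alpha> * 2 powr (\<alpha> + 1) * S"
  have C0: "C0 \<ge> 0" unfolding C0_def using S0 assms by simp
  define \<delta> where "\<delta> = min (1/4) ((1 / (C0 + 1)) powr (1 / (1 + \<alpha>)))"
  have \<delta>0: "\<delta> > 0" unfolding \<delta>_def using C0 by simp
  show ?thesis
  proof (rule exI[of _ \<delta>], rule conjI[OF \<delta>0], intro allI impI ballI)
    fix \<rho> :: "real \<Rightarrow> real" and x :: real
    assume H: "\<rho> C1_differentiable_on UNIV \<and> (\<forall>t. \<rho> (t + 1) = \<rho> t) \<and>
           (\<forall>t. \<rho> (- t) = \<rho> t) \<and> mono_on {0..1/2} \<rho>"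
      and xin: "x \<in> {0<..\<delta>}"
    have C1: "\<rho> C1_differentiable_on UNIV" and per: "\<forall>t. \<rho> (t + 1) = \<rho> t"
      and ev: "\<forall>t. \<rho> (- t) = \<rho> t" and mo: "mono_on {0..1/2} \<rho>" using H by simp_all
    obtain D where D: "\<And>t. (\<rho> has_vector_derivative D t) (at t)" and Dc: "continuous_on UNIV D"
      using C1 unfolding C1_differentiable_on_def by auto
    have der: "\<And>t. (\<rho> has_real_derivative D t) (at t)"
      using D by (simp add: has_real_derivative_iff_has_vector_derivative)
    have rc: "\<And>T. continuous_on T \<rho>"
      using der by (meson DERIV_isCont continuous_at_imp_continuous_on)
    have "bounded (D ` {0..1})"
      by (intro compact_imp_bounded compact_continuous_image continuous_on_subset[OF Dc]) auto
    then obtain M where M': "\<forall>t\<in>{0..1}. \<bar>D t\<bar> \<le> M"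
      by (auto simp: bounded_iff)
    hence M: "\<And>t. t \<in> {0..1} \<Longrightarrow> \<bar>D t\<bar> \<le> M" by simp
    have M0: "M \<ge> 0" using M[of 0] by simp
    have x0: "0 < x" and xd: "x \<le> \<delta>" using xin by simp_all
    have x14: "x \<le> 1/4" using xd unfolding \<delta>_def by simp
    have gnn: "\<And>y. \<bar>y\<bar> \<le> x \<Longrightarrow> \<rho> y \<le> \<rho> x"
      using even_mono_le[OF ev mo] x14 by simp
    define J where "J = integral {0..x} (\<lambda>y. \<rho> x - \<rho> y)"
    have J0: "J \<ge> 0" unfolding J_def
    proof (rule integral_nonneg)
      show "(\<lambda>y. \<rho> x - \<rho> y) integrable_on {0..x}"
        by (rule integrable_continuous_interval) (intro continuous_intros rc)
      fix y assume "y \<in> {0..x}"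
      thus "0 \<le> \<rho> x - \<rho> y" using gnn[of y] by simp
    qed
    have Afact: "I_term \<alpha> \<rho> x \<le> - (1 / x powr \<alpha>) * J"
      unfolding J_def by (rule partA[OF assms der M M0 rc x0 x14 gnn])
    have IIfact: "II2_term \<alpha> \<rho> x \<le> (C0 * x) * J"
      using partB[OF assms(1) rc per ev x0 x14 gnn S] unfolding C0_def J_def by (simp add: mult_ac)
    have small: "C0 * x \<le> 1 / x powr \<alpha>"
      by (rule small_lem[OF assms(1) C0 x0]) (use xd in \<open>simp add: \<delta>_def\<close>)
    show "I_term \<alpha> \<rho> x + II2_term \<alpha> \<rho> x \<le> 0"
      by (rule comb[OF Afact IIfact J0 small])
  qed
qed

end
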